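(* Let $Q=\{1,2,\dots,p\}$ and, for every $q\in Q$, let $f_q:\mathbb{R}^n\to\mathbb{R}$ be a convex function and $C_q\subset\mathbb{R}^n$ a nonempty closed convex set; set $M_q(x)=\partial f_q(x)+N_{C_q}(x)$ and $A_q:=\operatorname{arg\,min}_{x\in C_q}f_q(x)$. Suppose $A:=\bigcap_{q\in Q}A_q$ is nonempty. Given a switching signal $\sigma:[0,\infty)\to Q$, let $$Q_\infty(\sigma):=\{q\in Q\mid \mu(T_q(\sigma))=\infty\},\qquad A_\infty(\sigma):=\bigcap_{q\in Q_\infty(\sigma)}A_q,$$ where $T_q(\sigma):=\{t\in[0,\infty)\mid\sigma(t)=q\}$ and $\mu$ is Lebesgue measure. Then every complete solution $\phi$ of the switching system $\dot x\in -M_{\sigma(t)}(x)$ is such that $\lim_{t\to\infty}\phi(t)$ exists and belongs to $A_\infty(\sigma)$.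
   Context: $\partial f_q(x)$ denotes the convex-analysis subdifferential $\{y\in\mathbb{R}^n \mid f_q(x')\ge f_q(x)+y\cdot(x'-x)\ \forall x'\in\mathbb{R}^n\}$. $N_{C}(x)$ is the normal cone $\{v\in\mathbb{R}^n\mid v\cdot(x'-x)\le 0\ \forall x'\in C\}$ if $x\in C$, and $N_C(x)=\emptyset$ if $x\notin C$. A switching signal is a function $\sigma:[0,\infty)\to Q$ for which there is a sequence $0=t_0<t_1<t_2<\dots$ (with $t_j\to\infty$) such that $\sigma$ is constant on each $[t_j,t_{j+1})$. Given $\sigma$, a solution is a locally absolutely continuous function $\phi:\operatorname{dom}\phi\to\mathbb{R}^n$, with $\operatorname{dom}\phi$ equal to $[0,T)$, $[0,T]$ or $[0,\infty)$, such that $\dot\phi(t)\in -M_{\sigma(t)}(\phi(t))$ for almost every $t\in\operatorname{dom}\phi$. A solution is complete if $\operatorname{dom}\phi=[0,\infty)$. *)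

theory Defs
  imports "HOL-Analysis.Analysis"
begin

definition subdiff :: "('a::real_inner \<Rightarrow> real) \<Rightarrow> 'a \<Rightarrow> 'a set" where
  "subdiff f x = {y. \<forall>x'. f x' \<ge> f x + y \<bullet> (x' - x)}"

definition normal_cone :: "'a::real_inner set \<Rightarrow> 'a \<Rightarrow> 'a set" where
  "normal_cone C x = (if x \<in> C then {v. \<forall>x'\<in>C. v \<bullet> (x' - x) \<le> 0} else {})"

definition Mop :: "('a::real_inner \<Rightarrow> real) \<Rightarrow> 'a set \<Rightarrow> 'a \<Rightarrow> 'a set" where
  "Mop f C x = {a + b | a b. a \<in> subdiff f x \<and> b \<in> normal_cone C x}"

definition argmin_on :: "('a \<Rightarrow> real) \<Rightarrow> 'a set \<Rightarrow> 'a set" where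
  "argmin_on f C = {x \<in> C. \<forall>y\<in>C. f x \<le> f y}"

definition abs_continuous_on :: "real \<Rightarrow> real \<Rightarrow> (real \<Rightarrow> 'a::real_normed_vector) \<Rightarrow> bool" where
  "abs_continuous_on a b f \<longleftrightarrow>
    (\<forall>\<epsilon>>0. \<exists>\<delta>>0. \<forall>(n::nat) (u::nat \<Rightarrow> real) (v::nat \<Rightarrow> real).
       (\<forall>k<n. a \<le> u k \<and> u k \<le> v k \<and> v k \<le> b) \<and>
       (\<forall>i<n. \<forall>j<n. i \<noteq> j \<longrightarrow> v i \<le> u j \<or> v j \<le> u i) \<and>
       (\<Sum>k<n. v k - u k) < \<delta>
       \<longrightarrow> (\<Sum>k<n. norm (f (v k) - f (u k))) < \<epsilon>)"

definition loc_abs_continuous :: "(real \<Rightarrow> 'a::real_normed_vector) \<Rightarrow> bool" where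
  "loc_abs_continuous f \<longleftrightarrow> (\<forall>T\<ge>0. abs_continuous_on 0 T f)"

definition switching_signal :: "'q set \<Rightarrow> (real \<Rightarrow> 'q) \<Rightarrow> bool" where
  "switching_signal Q \<sigma> \<longleftrightarrow> (\<forall>t\<ge>0. \<sigma> t \<in> Q) \<and>
     (\<exists>s::nat \<Rightarrow> real. s 0 = 0 \<and> strict_mono s \<and> filterlim s at_top sequentially \<and>
        (\<forall>j. \<forall>t\<in>{s j..<s (Suc j)}. \<sigma> t = \<sigma> (s j)))"

definition complete_solution ::
    "('q \<Rightarrow> 'a \<Rightarrow> 'a set) \<Rightarrow> (real \<Rightarrow> 'q) \<Rightarrow> (real \<Rightarrow> 'a::euclidean_space) \<Rightarrow> bool" where
  "complete_solution M \<sigma> \<phi> \<longleftrightarrow> loc_abs_continuous \<phi> \<and>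
     (AE t in lebesgue. t \<ge> 0 \<longrightarrow>
        (\<exists>v. (\<phi> has_vector_derivative v) (at t) \<and> - v \<in> M (\<sigma> t) (\<phi> t)))"

end

theory Submission
  imports Defs
begin

lemma acD:
  assumes "abs_continuous_on a b k" "e > 0"
  obtains \<delta> where "\<delta> > 0" "\<And>(n::nat) (u::nat \<Rightarrow> real) (v::nat \<Rightarrow> real).
       \<forall>k<n. a \<le> u k \<and> u k \<le> v k \<and> v k \<le> b \<Longrightarrow>
       \<forall>i<n. \<forall>j<n. i \<noteq> j \<longrightarrow> v i \<le> u j \<or> v j \<le> u i \<Longrightarrow>
       (\<Sum>k<n. v k - u k) < \<delta>
       \<Longrightarrow> (\<Sum>i<n. norm (k (v i) - k (u i))) < e"
proof -
  have "\<exists>\<delta>>0. \<forall>(n::nat) (u::nat \<Rightarrow> real) (v::nat \<Rightarrow> real).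
       (\<forall>k<n. a \<le> u k \<and> u k \<le> v k \<and> v k \<le> b) \<and>
       (\<forall>i<n. \<forall>j<n. i \<noteq> j \<longrightarrow> v i \<le> u j \<or> v j \<le> u i) \<and>
       (\<Sum>k<n. v k - u k) < \<delta>
       \<longrightarrow> (\<Sum>i<n. norm (k (v i) - k (u i))) < e"
    using assms unfolding abs_continuous_on_def by blast
  then obtain \<delta> where "\<delta> > 0" and H: "\<forall>(n::nat) (u::nat \<Rightarrow> real) (v::nat \<Rightarrow> real).
       (\<forall>k<n. a \<le> u k \<and> u k \<le> v k \<and> v k \<le> b) \<and>
       (\<forall>i<n. \<forall>j<n. i \<noteq> j \<longrightarrow> v i \<le> u j \<or> v j \<le> u i) \<and>
       (\<Sum>k<n. v k - u k) < \<delta>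
       \<longrightarrow> (\<Sum>i<n. norm (k (v i) - k (u i))) < e" by blast
  show thesis
  proof (rule that[OF \<open>\<delta> > 0\<close>])
    fix n :: nat and u v :: "nat \<Rightarrow> real"
    assume "\<forall>k<n. a \<le> u k \<and> u k \<le> v k \<and> v k \<le> b"
       "\<forall>i<n. \<forall>j<n. i \<noteq> j \<longrightarrow> v i \<le> u j \<or> v j \<le> u i"
       "(\<Sum>k<n. v k - u k) < \<delta>"
    then show "(\<Sum>i<n. norm (k (v i) - k (u i))) < e" using H by blast
  qed
qed

lemma ac_sub:
  assumes "abs_continuous_on a b k" "a \<le> c" "d \<le> b"
  shows "abs_continuous_on c d k"
  unfolding abs_continuous_on_def
proof (intro allI impI)
  fix e :: real assume "e > 0"
  obtain \<delta> where "\<delta> > 0" and H: "\<And>(n::nat) (u::nat \<Rightarrow> real) (v::nat \<Rightarrow> real).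
       \<forall>k<n. a \<le> u k \<and> u k \<le> v k \<and> v k \<le> b \<Longrightarrow>
       \<forall>i<n. \<forall>j<n. i \<noteq> j \<longrightarrow> v i \<le> u j \<or> v j \<le> u i \<Longrightarrow>
       (\<Sum>k<n. v k - u k) < \<delta>
       \<Longrightarrow> (\<Sum>i<n. norm (k (v i) - k (u i))) < e"
    using acD[OF assms(1) \<open>e > 0\<close>] by blast
  show "\<exists>\<delta>>0. \<forall>(n::nat) (u::nat \<Rightarrow> real) (v::nat \<Rightarrow> real).
       (\<forall>k<n. c \<le> u k \<and> u k \<le> v k \<and> v k \<le> d) \<and>
       (\<forall>i<n. \<forall>j<n. i \<noteq> j \<longrightarrow> v i \<le> u j \<or> v j \<le> u i) \<and>
       (\<Sum>k<n. v k - u k) < \<delta>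
       \<longrightarrow> (\<Sum>i<n. norm (k (v i) - k (u i))) < e"
  proof (intro exI[of _ \<delta>] conjI allI impI)
    fix n :: nat and u v :: "nat \<Rightarrow> real"
    assume P: "(\<forall>k<n. c \<le> u k \<and> u k \<le> v k \<and> v k \<le> d) \<and>
       (\<forall>i<n. \<forall>j<n. i \<noteq> j \<longrightarrow> v i \<le> u j \<or> v j \<le> u i) \<and>
       (\<Sum>k<n. v k - u k) < \<delta>"
    have "(\<forall>k<n. a \<le> u k \<and> u k \<le> v k \<and> v k \<le> b)" using P assms(2,3) by force
    then show "(\<Sum>i<n. norm (k (v i) - k (u i))) < e" using H P by blast
  qed (rule \<open>\<delta> > 0\<close>)
qed

lemma ac_cont:
  assumes "abs_continuous_on a b k"
  shows "continuous_on {a..b} k"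
  unfolding continuous_on_iff
proof (intro ballI allI impI)
  fix x e :: real assume x: "x \<in> {a..b}" and "e > 0"
  obtain \<delta> where "\<delta> > 0" and H: "\<And>(n::nat) (u::nat \<Rightarrow> real) (v::nat \<Rightarrow> real).
       \<forall>k<n. a \<le> u k \<and> u k \<le> v k \<and> v k \<le> b \<Longrightarrow>
       \<forall>i<n. \<forall>j<n. i \<noteq> j \<longrightarrow> v i \<le> u j \<or> v j \<le> u i \<Longrightarrow>
       (\<Sum>k<n. v k - u k) < \<delta>
       \<Longrightarrow> (\<Sum>i<n. norm (k (v i) - k (u i))) < e"
    using acD[OF assms(1) \<open>e > 0\<close>] by blast
  show "\<exists>d>0. \<forall>x'\<in>{a..b}. dist x' x < d \<longrightarrow> dist (k x') (k x) < e"
  proof (intro exI[of _ \<delta>] conjI ballI impI)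
    fix y assume y: "y \<in> {a..b}" "dist y x < \<delta>"
    have "norm (k (max x y) - k (min x y)) < e"
      using H[of 1 "\<lambda>_. min x y" "\<lambda>_. max x y"] x y by (auto simp: dist_real_def max_def min_def split: if_splits)
    then show "dist (k y) (k x) < e"
      by (cases "x \<le> y") (auto simp: dist_norm norm_minus_commute max_def min_def)
  qed (use \<open>\<delta> > 0\<close> in auto)
qed

lemma ac_lip:
  fixes g :: "real \<Rightarrow> real" and \<phi> :: "real \<Rightarrow> 'a::real_normed_vector"
  assumes "abs_continuous_on a b \<phi>"
    and L: "\<And>u v. u \<in> {a..b} \<Longrightarrow> v \<in> {a..b} \<Longrightarrow> \<bar>g v - g u\<bar> \<le> L * norm (\<phi> v - \<phi> u)"
  shows "abs_continuous_on a b g"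
  unfolding abs_continuous_on_def
proof (intro allI impI)
  fix e :: real assume "e > 0"
  define L' where "L' = \<bar>L\<bar> + 1"
  have L': "L' > 0" unfolding L'_def by simp
  obtain \<delta> where "\<delta> > 0" and H: "\<And>(n::nat) (u::nat \<Rightarrow> real) (v::nat \<Rightarrow> real).
       \<forall>k<n. a \<le> u k \<and> u k \<le> v k \<and> v k \<le> b \<Longrightarrow>
       \<forall>i<n. \<forall>j<n. i \<noteq> j \<longrightarrow> v i \<le> u j \<or> v j \<le> u i \<Longrightarrow>
       (\<Sum>k<n. v k - u k) < \<delta>
       \<Longrightarrow> (\<Sum>i<n. norm (\<phi> (v i) - \<phi> (u i))) < e / L'"
    using acD[OF assms(1), of "e / L'"] divide_pos_pos[OF \<open>e > 0\<close> L'] by blast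
  show "\<exists>\<delta>>0. \<forall>(n::nat) (u::nat \<Rightarrow> real) (v::nat \<Rightarrow> real).
       (\<forall>k<n. a \<le> u k \<and> u k \<le> v k \<and> v k \<le> b) \<and>
       (\<forall>i<n. \<forall>j<n. i \<noteq> j \<longrightarrow> v i \<le> u j \<or> v j \<le> u i) \<and>
       (\<Sum>k<n. v k - u k) < \<delta>
       \<longrightarrow> (\<Sum>i<n. norm (g (v i) - g (u i))) < e"
  proof (intro exI[of _ \<delta>] conjI allI impI)
    fix n :: nat and u v :: "nat \<Rightarrow> real"
    assume P: "(\<forall>k<n. a \<le> u k \<and> u k \<le> v k \<and> v k \<le> b) \<and>
       (\<forall>i<n. \<forall>j<n. i \<noteq> j \<longrightarrow> v i \<le> u j \<or> v j \<le> u i) \<and>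
       (\<Sum>k<n. v k - u k) < \<delta>"
    have "(\<Sum>i<n. norm (g (v i) - g (u i))) \<le> (\<Sum>i<n. L' * norm (\<phi> (v i) - \<phi> (u i)))"
    proof (rule sum_mono)
      fix i assume "i \<in> {..<n}"
      then have "u i \<in> {a..b}" "v i \<in> {a..b}" using P by auto
      then have "\<bar>g (v i) - g (u i)\<bar> \<le> L * norm (\<phi> (v i) - \<phi> (u i))" by (rule L)
      also have "\<dots> \<le> L' * norm (\<phi> (v i) - \<phi> (u i))"
        unfolding L'_def by (intro mult_right_mono) auto
      finally show "norm (g (v i) - g (u i)) \<le> L' * norm (\<phi> (v i) - \<phi> (u i))" by simp
    qed
    also have "\<dots> = L' * (\<Sum>i<n. norm (\<phi> (v i) - \<phi> (u i)))" by (simp add: sum_distrib_left)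
    also have "\<dots> < L' * (e / L')" using H P L' by (intro mult_strict_left_mono) blast+
    also have "\<dots> = e" using L' by simp
    finally show "(\<Sum>i<n. norm (g (v i) - g (u i))) < e" .
  qed (use \<open>\<delta> > 0\<close> in auto)
qed

lemma ac_add:
  fixes g h :: "real \<Rightarrow> real"
  assumes "abs_continuous_on a b g" "abs_continuous_on a b h"
  shows "abs_continuous_on a b (\<lambda>t. g t + h t)"
  unfolding abs_continuous_on_def
proof (intro allI impI)
  fix e :: real assume "e > 0"
  obtain \<delta>1 where "\<delta>1 > 0" and H1: "\<And>(n::nat) (u::nat \<Rightarrow> real) (v::nat \<Rightarrow> real).
       \<forall>k<n. a \<le> u k \<and> u k \<le> v k \<and> v k \<le> b \<Longrightarrow>
       \<forall>i<n. \<forall>j<n. i \<noteq> j \<longrightarrow> v i \<le> u j \<or> v j \<le> u i \<Longrightarrow>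
       (\<Sum>k<n. v k - u k) < \<delta>1
       \<Longrightarrow> (\<Sum>i<n. norm (g (v i) - g (u i))) < e / 2"
    using acD[OF assms(1), of "e / 2"] half_gt_zero[OF \<open>e > 0\<close>] by blast
  obtain \<delta>2 where "\<delta>2 > 0" and H2: "\<And>(n::nat) (u::nat \<Rightarrow> real) (v::nat \<Rightarrow> real).
       \<forall>k<n. a \<le> u k \<and> u k \<le> v k \<and> v k \<le> b \<Longrightarrow>
       \<forall>i<n. \<forall>j<n. i \<noteq> j \<longrightarrow> v i \<le> u j \<or> v j \<le> u i \<Longrightarrow>
       (\<Sum>k<n. v k - u k) < \<delta>2
       \<Longrightarrow> (\<Sum>i<n. norm (h (v i) - h (u i))) < e / 2"
    using acD[OF assms(2), of "e / 2"] half_gt_zero[OF \<open>e > 0\<close>] by blast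
  show "\<exists>\<delta>>0. \<forall>(n::nat) (u::nat \<Rightarrow> real) (v::nat \<Rightarrow> real).
       (\<forall>k<n. a \<le> u k \<and> u k \<le> v k \<and> v k \<le> b) \<and>
       (\<forall>i<n. \<forall>j<n. i \<noteq> j \<longrightarrow> v i \<le> u j \<or> v j \<le> u i) \<and>
       (\<Sum>k<n. v k - u k) < \<delta>
       \<longrightarrow> (\<Sum>i<n. norm ((g (v i) + h (v i)) - (g (u i) + h (u i)))) < e"
  proof (intro exI[of _ "min \<delta>1 \<delta>2"] conjI allI impI)
    fix n :: nat and u v :: "nat \<Rightarrow> real"
    assume P: "(\<forall>k<n. a \<le> u k \<and> u k \<le> v k \<and> v k \<le> b) \<and>
       (\<forall>i<n. \<forall>j<n. i \<noteq> j \<longrightarrow> v i \<le> u j \<or> v j \<le> u i) \<and>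
       (\<Sum>k<n. v k - u k) < min \<delta>1 \<delta>2"
    have "(\<Sum>i<n. norm ((g (v i) + h (v i)) - (g (u i) + h (u i))))
        \<le> (\<Sum>i<n. norm (g (v i) - g (u i)) + norm (h (v i) - h (u i)))"
      by (intro sum_mono) simp
    also have "\<dots> = (\<Sum>i<n. norm (g (v i) - g (u i))) + (\<Sum>i<n. norm (h (v i) - h (u i)))"
      by (simp add: sum.distrib)
    also have "\<dots> < e / 2 + e / 2"
      apply (intro add_strict_mono H1 H2) using P by auto
    finally show "(\<Sum>i<n. norm ((g (v i) + h (v i)) - (g (u i) + h (u i)))) < e" by simp
  qed (use \<open>\<delta>1 > 0\<close> \<open>\<delta>2 > 0\<close> in auto)
qed

lemma ac_linear: "abs_continuous_on a b (\<lambda>t::real. c * t)"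
proof -
  have "abs_continuous_on a b (\<lambda>t::real. t)"
    unfolding abs_continuous_on_def
  proof (intro allI impI)
    fix e :: real assume "e > 0"
    show "\<exists>\<delta>>0. \<forall>(n::nat) (u::nat \<Rightarrow> real) (v::nat \<Rightarrow> real).
       (\<forall>k<n. a \<le> u k \<and> u k \<le> v k \<and> v k \<le> b) \<and>
       (\<forall>i<n. \<forall>j<n. i \<noteq> j \<longrightarrow> v i \<le> u j \<or> v j \<le> u i) \<and>
       (\<Sum>k<n. v k - u k) < \<delta>
       \<longrightarrow> (\<Sum>i<n. norm (v i - u i)) < e"
      apply (rule exI[of _ e]) using \<open>e > 0\<close> by auto
  qed
  then show ?thesis
    by (rule ac_lip[where L="\<bar>c\<bar>"]) (simp add: abs_mult right_diff_distrib[symmetric])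
qed

lemma open_conn_interval:
  fixes K :: "real set"
  assumes "open K" "connected K" "K \<noteq> {}" "bounded K"
  shows "K = {Inf K<..<Sup K}"
proof -
  have bb: "bdd_below K" "bdd_above K" using assms(4) by (auto simp: bounded_imp_bdd_below bounded_imp_bdd_above)
  have iv: "is_interval K" using assms(2) is_interval_connected_1 by blast
  show ?thesis
  proof
    show "K \<subseteq> {Inf K<..<Sup K}"
    proof
      fix x assume x: "x \<in> K"
      obtain e where e: "e > 0" "ball x e \<subseteq> K" using assms(1) x open_contains_ball by blast
      have "x - e/2 \<in> K" "x + e/2 \<in> K" using e by (auto simp: dist_real_def subset_iff)
      then have "Inf K \<le> x - e/2" "x + e/2 \<le> Sup K" using bb by (auto intro: cInf_lower cSup_upper)
      then show "x \<in> {Inf K<..<Sup K}" using e by auto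
    qed
  next
    show "{Inf K<..<Sup K} \<subseteq> K"
    proof
      fix y assume y: "y \<in> {Inf K<..<Sup K}"
      then obtain x1 where "x1 \<in> K" "x1 < y" using cInf_less_iff[OF assms(3) bb(1)] by auto
      moreover obtain x2 where "x2 \<in> K" "y < x2" using less_cSup_iff[OF assms(3) bb(2)] y by auto
      ultimately show "y \<in> K" using iv unfolding is_interval_1 by (meson less_imp_le)
    qed
  qed
qed

lemma disj_intervals:
  fixes l1 r1 l2 r2 :: real
  assumes "l1 < r1" "l2 < r2" "{l1<..<r1} \<inter> {l2<..<r2} = {}"
  shows "r1 \<le> l2 \<or> r2 \<le> l1"
proof (rule ccontr)
  assume "\<not> ?thesis"
  then have "max l1 l2 < min r1 r2" using assms by auto
  then have "(max l1 l2 + min r1 r2)/2 \<in> {l1<..<r1} \<inter> {l2<..<r2}" by auto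
  then show False using assms(3) by blast
qed

lemma ac_lusin:
  fixes k :: "real \<Rightarrow> real"
  assumes ac: "abs_continuous_on a b k" and N: "N \<subseteq> {a<..<b}" "negligible N"
  shows "negligible (k ` N)"
  unfolding negligible_outer_le
proof (intro allI impI)
  fix e :: real assume "e > 0"
  obtain \<delta> where "\<delta> > 0" and H: "\<And>(n::nat) (u::nat \<Rightarrow> real) (v::nat \<Rightarrow> real).
       \<forall>k<n. a \<le> u k \<and> u k \<le> v k \<and> v k \<le> b \<Longrightarrow>
       \<forall>i<n. \<forall>j<n. i \<noteq> j \<longrightarrow> v i \<le> u j \<or> v j \<le> u i \<Longrightarrow>
       (\<Sum>k<n. v k - u k) < \<delta>
       \<Longrightarrow> (\<Sum>i<n. norm (k (v i) - k (u i))) < e"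
    using acD[OF ac \<open>e > 0\<close>] by blast
  have Nnull: "N \<in> null_sets lebesgue" using N(2) negligible_iff_null_sets by blast
  then have Nleb: "N \<in> sets lebesgue" by auto
  obtain U where U: "open U" "N \<subseteq> U" "(U - N) \<in> lmeasurable" "emeasure lebesgue (U - N) < ennreal \<delta>"
    using sets_lebesgue_outer_open[OF Nleb \<open>\<delta> > 0\<close>] by blast
  define U' where "U' = U \<inter> {a<..<b}"
  have U'open: "open U'" unfolding U'_def using U(1) by auto
  have NU': "N \<subseteq> U'" unfolding U'_def using U(2) N(1) by auto
  have U'sets: "U' \<in> sets lebesgue" using U'open by auto
  have "emeasure lebesgue U' \<le> emeasure lebesgue ((U - N) \<union> N)"
    by (rule emeasure_mono) (use U(1) Nleb in \<open>auto simp: U'_def\<close>)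
  also have "\<dots> \<le> emeasure lebesgue (U - N) + emeasure lebesgue N"
    by (rule emeasure_subadditive) (use U(3) Nleb in auto)
  also have "\<dots> = emeasure lebesgue (U - N)" using Nnull by auto
  also have "\<dots> < ennreal \<delta>" by (rule U(4))
  finally have U'lt: "emeasure lebesgue U' < ennreal \<delta>" .
  then have U'm: "U' \<in> lmeasurable" using U'sets by (intro fmeasurableI) (auto simp: less_top[symmetric] top.extremum_strict intro: order.strict_trans)
  have U'meas: "measure lebesgue U' < \<delta>"
    using U'lt emeasure_eq_measure2[OF U'm] \<open>\<delta> > 0\<close> by (simp add: ennreal_less_iff)
  define \<K> where "\<K> = components U'"
  have Kprops: "K = {Inf K<..<Sup K} \<and> a \<le> Inf K \<and> Inf K < Sup K \<and> Sup K \<le> b" if K: "K \<in> \<K>" for K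
  proof -
    have Ksub: "K \<subseteq> {a<..<b}" using in_components_subset[OF K[unfolded \<K>_def]] unfolding U'_def by auto
    have Kne: "K \<noteq> {}" using in_components_nonempty K \<K>_def by blast
    have bnd: "bounded K" using Ksub bounded_subset[OF bounded_Ioo] by blast
    have Keq: "K = {Inf K<..<Sup K}"
      by (rule open_conn_interval) (use K U'open open_components in_components_connected Kne bnd in \<open>auto simp: \<K>_def\<close>)
    have "a \<le> Inf K" using Ksub Kne by (intro cInf_greatest) auto
    moreover have "Sup K \<le> b" using Ksub Kne by (intro cSup_least) auto
    moreover have "Inf K < Sup K" using Kne Keq by (metis greaterThanLessThan_empty_iff not_less)
    ultimately show ?thesis using Keq by blast
  qed
  have cnt: "countable \<K>"
  proof (rule countable_disjoint_open_subsets)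
    show "open S" if "S \<in> \<K>" for S using that U'open open_components \<K>_def by blast
    show "pairwise disjnt \<K>" using pairwise_disjoint_components unfolding \<K>_def pairwise_def disjnt_def by blast
  qed
  have disjK: "Sup K1 \<le> Inf K2 \<or> Sup K2 \<le> Inf K1" if "K1 \<in> \<K>" "K2 \<in> \<K>" "K1 \<noteq> K2" for K1 K2
  proof (rule disj_intervals)
    show "Inf K1 < Sup K1" "Inf K2 < Sup K2" using Kprops that by auto
    have "K1 \<inter> K2 = {}" using components_nonoverlap that unfolding \<K>_def by blast
    then show "{Inf K1<..<Sup K1} \<inter> {Inf K2<..<Sup K2} = {}" using Kprops[OF that(1)] Kprops[OF that(2)] by simp
  qed
  have kc: "continuous_on {a..b} k" by (rule ac_cont[OF ac])
  have "\<forall>K\<in>\<K>. \<exists>p. fst p \<in> {Inf K..Sup K} \<and> snd p \<in> {Inf K..Sup K} \<and>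
            k ` {Inf K..Sup K} = {k (fst p)..k (snd p)} \<and> k (fst p) \<le> k (snd p)"
  proof
    fix K assume K: "K \<in> \<K>"
    have "continuous_on {Inf K..Sup K} k" using Kprops[OF K] by (auto intro: continuous_on_subset[OF kc])
    then obtain c d where cd: "k ` {Inf K..Sup K} = {c..d}" "c \<le> d"
      using continuous_image_closed_interval[of "Inf K" "Sup K" k] Kprops[OF K] by auto
    then have "c \<in> k ` {Inf K..Sup K}" "d \<in> k ` {Inf K..Sup K}" by auto
    then obtain u v where "u \<in> {Inf K..Sup K}" "v \<in> {Inf K..Sup K}" "c = k u" "d = k v" by blast
    then show "\<exists>p. fst p \<in> {Inf K..Sup K} \<and> snd p \<in> {Inf K..Sup K} \<and>
            k ` {Inf K..Sup K} = {k (fst p)..k (snd p)} \<and> k (fst p) \<le> k (snd p)"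
      using cd by (intro exI[of _ "(u,v)"]) auto
  qed
  then obtain P where P: "\<And>K. K \<in> \<K> \<Longrightarrow> fst (P K) \<in> {Inf K..Sup K} \<and> snd (P K) \<in> {Inf K..Sup K} \<and>
            k ` {Inf K..Sup K} = {k (fst (P K))..k (snd (P K))} \<and> k (fst (P K)) \<le> k (snd (P K))"
    by metis
  define J where "J K = k ` {Inf K..Sup K}" for K
  have Jmeas: "measure lebesgue (J K) = \<bar>k (snd (P K)) - k (fst (P K))\<bar>" if "K \<in> \<K>" for K
    using P[OF that] unfolding J_def by simp
  have Jlm: "J K \<in> lmeasurable" if "K \<in> \<K>" for K
    using P[OF that] unfolding J_def by simp
  have key: "(\<Sum>K\<in>G. measure lebesgue (J K)) < e" if G: "finite G" "G \<subseteq> \<K>" for G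
  proof -
    obtain g where g: "bij_betw g {0..<card G} G" using ex_bij_betw_nat_finite[OF G(1)] by blast
    define n where "n = card G"
    define uu where "uu i = min (fst (P (g i))) (snd (P (g i)))" for i
    define vv where "vv i = max (fst (P (g i))) (snd (P (g i)))" for i
    have gK: "g i \<in> \<K>" if "i < n" for i using g G(2) that unfolding n_def bij_betw_def by auto
    have b1: "\<forall>i<n. a \<le> uu i \<and> uu i \<le> vv i \<and> vv i \<le> b"
    proof (intro allI impI)
      fix i assume "i < n"
      note A = Kprops[OF gK[OF this]] P[OF gK[OF this]]
      show "a \<le> uu i \<and> uu i \<le> vv i \<and> vv i \<le> b" using A unfolding uu_def vv_def by auto
    qed
    have b2: "\<forall>i<n. \<forall>j<n. i \<noteq> j \<longrightarrow> vv i \<le> uu j \<or> vv j \<le> uu i"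
    proof (intro allI impI)
      fix i j assume ij: "i < n" "j < n" "i \<noteq> j"
      then have "g i \<noteq> g j" using g unfolding bij_betw_def inj_on_def n_def by auto
      then have "Sup (g i) \<le> Inf (g j) \<or> Sup (g j) \<le> Inf (g i)" using disjK gK ij by blast
      moreover note P[OF gK[OF ij(1)]] P[OF gK[OF ij(2)]]
      ultimately show "vv i \<le> uu j \<or> vv j \<le> uu i" unfolding uu_def vv_def by auto
    qed
    have "(\<Sum>i<n. vv i - uu i) \<le> (\<Sum>i<n. Sup (g i) - Inf (g i))"
    proof (rule sum_mono)
      fix i assume "i \<in> {..<n}"
      then have "i < n" by simp
      then show "vv i - uu i \<le> Sup (g i) - Inf (g i)" using P[OF gK[OF \<open>i < n\<close>]] unfolding uu_def vv_def by auto
    qed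
    also have "\<dots> = (\<Sum>K\<in>G. Sup K - Inf K)"
      using sum.reindex_bij_betw[OF g, of "\<lambda>K. Sup K - Inf K"] unfolding n_def by (simp add: lessThan_atLeast0)
    also have "\<dots> = (\<Sum>K\<in>G. measure lebesgue K)"
    proof (rule sum.cong)
      fix K assume "K \<in> G"
      then have "K = {Inf K<..<Sup K}" "Inf K < Sup K" using Kprops G(2) by blast+
      then show "Sup K - Inf K = measure lebesgue K" by (metis less_imp_le measure_lborel_Ioo measure_completion sets_lborel borel_open open_greaterThanLessThan)
    qed simp
    also have "\<dots> = measure lebesgue (\<Union>G)"
    proof (rule measure_Union'[symmetric])
      show "finite G" by (rule G(1))
      show "S \<in> lmeasurable" if "S \<in> G" for S
        using Kprops[of S] that G(2) by (metis subsetD lmeasurable_box box_real(1))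
      show "pairwise disjnt G" using pairwise_disjoint_components G(2) unfolding \<K>_def pairwise_def disjnt_def by blast
    qed
    also have "\<dots> \<le> measure lebesgue U'"
    proof (rule measure_mono_fmeasurable)
      show "\<Union>G \<subseteq> U'" using G(2) in_components_subset unfolding \<K>_def by blast
      show "\<Union>G \<in> sets lebesgue" using G Kprops
        by (intro sets.finite_Union) (auto, metis subsetD borel_open open_greaterThanLessThan sets_completionI_sets sets_lborel)
    qed (rule U'm)
    also have "\<dots> < \<delta>" by (rule U'meas)
    finally have "(\<Sum>i<n. norm (k (vv i) - k (uu i))) < e" by (intro H b1 b2)
    also have "(\<Sum>i<n. norm (k (vv i) - k (uu i))) = (\<Sum>i<n. measure lebesgue (J (g i)))"
    proof (rule sum.cong)
      fix i assume "i \<in> {..<n}"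
      then show "norm (k (vv i) - k (uu i)) = measure lebesgue (J (g i))"
        using Jmeas[OF gK] P[OF gK] unfolding uu_def vv_def by (auto simp: max_def min_def)
    qed simp
    also have "\<dots> = (\<Sum>K\<in>G. measure lebesgue (J K))"
      using sum.reindex_bij_betw[OF g, of "\<lambda>K. measure lebesgue (J K)"] unfolding n_def by (simp add: lessThan_atLeast0)
    finally show ?thesis by simp
  qed
  show "\<exists>T. k ` N \<subseteq> T \<and> T \<in> lmeasurable \<and> measure lebesgue T \<le> e"
  proof (cases "\<K> = {}")
    case True
    then have "U' = {}" unfolding \<K>_def by simp
    then have "N = {}" using NU' by auto
    then show ?thesis using \<open>e > 0\<close> by (intro exI[of _ "{}"]) auto
  next
    case False
    define F where "F = from_nat_into \<K>"
    have rF: "range F = \<K>" unfolding F_def using False cnt by simp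
    define A where "A m = (\<Union>K\<in>F ` {..<m}. J K)" for m
    have Asets: "A m \<in> lmeasurable" for m
      unfolding A_def using rF Jlm by (intro fmeasurable.finite_UN) auto
    have Ale: "measure lebesgue (A m) < e" for m
    proof -
      have "measure lebesgue (A m) \<le> (\<Sum>K\<in>F ` {..<m}. measure lebesgue (J K))"
        unfolding A_def using rF Jlm by (intro measure_UNION_le) (auto intro: fmeasurableD)
      also have "\<dots> < e" using rF by (intro key) auto
      finally show ?thesis .
    qed
    define T where "T = (\<Union>m. A m)"
    have incA: "incseq A" unfolding A_def incseq_def by (auto; metis lessThan_iff order_less_le_trans)
    have Tsets: "T \<in> sets lebesgue" unfolding T_def using Asets by (intro sets.countable_UN) (auto intro: fmeasurableD)
    have "emeasure lebesgue T = (SUP m. emeasure lebesgue (A m))"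
      unfolding T_def using Asets incA by (intro SUP_emeasure_incseq[symmetric]) (auto intro: fmeasurableD)
    also have "\<dots> \<le> ennreal e"
    proof (rule SUP_least)
      fix m show "emeasure lebesgue (A m) \<le> ennreal e"
        using emeasure_eq_measure2[OF Asets] Ale[of m] by (simp add: less_imp_le ennreal_leI)
    qed
    finally have Tle: "emeasure lebesgue T \<le> ennreal e" .
    have Tm: "T \<in> lmeasurable" using Tsets Tle by (intro fmeasurableI) (auto simp: top.not_eq_extremum intro: le_less_trans)
    have "measure lebesgue T \<le> e"
      using emeasure_eq_measure2[OF Tm] Tle \<open>e > 0\<close> by (simp add: ennreal_le_iff)
    moreover have "k ` N \<subseteq> T"
    proof
      fix y assume "y \<in> k ` N"
      then obtain x where x: "x \<in> N" "y = k x" by blast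
      then have "x \<in> U'" using NU' by auto
      then obtain K where K: "K \<in> \<K>" "x \<in> K" unfolding \<K>_def using Union_components[of U'] by blast
      then have "x \<in> {Inf K..Sup K}" using Kprops[OF K(1)] K(2) by (metis greaterThanLessThan_iff atLeastAtMost_iff less_imp_le)
      then have "y \<in> J K" unfolding J_def using x by auto
      obtain i where "F i = K" using rF K(1) by blast
      then have "y \<in> A (Suc i)" unfolding A_def using \<open>y \<in> J K\<close> by auto
      then show "y \<in> T" unfolding T_def by blast
    qed
    ultimately show ?thesis using Tm by blast
  qed
qed

lemma ac_mono:
  fixes h :: "real \<Rightarrow> real"
  assumes ac: "abs_continuous_on a b h" and ab: "a \<le> b"
    and D: "AE t in lebesgue. a < t \<and> t < b \<longrightarrow> (\<exists>D. (h has_real_derivative D) (at t) \<and> D \<le> 0)"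
  shows "h b \<le> h a"
proof (rule ccontr)
  assume "\<not> h b \<le> h a"
  then have hab: "h a < h b" by simp
  then have "a < b" using ab by (cases "a = b") auto
  define \<epsilon> where "\<epsilon> = (h b - h a) / (2 * (b - a))"
  have \<epsilon>pos: "\<epsilon> > 0" unfolding \<epsilon>_def using hab \<open>a < b\<close> by simp
  define k where "k t = h t + (- \<epsilon>) * t" for t
  have kac: "abs_continuous_on a b k" unfolding k_def by (rule ac_add[OF ac ac_linear])
  have kc: "continuous_on {a..b} k" by (rule ac_cont[OF kac])
  have e2: "\<epsilon> * (b - a) = (h b - h a) / 2"
    unfolding \<epsilon>_def using \<open>a < b\<close> by (simp add: field_simps)
  have "k b - k a = h b - h a - \<epsilon> * (b - a)"
    unfolding k_def by (simp add: algebra_simps)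
  then have "k b - k a = h b - h a - (h b - h a) / 2" by (simp only: e2)
  then have "k b - k a = (h b - h a) / 2" by (simp add: field_simps)
  then have kab: "k a < k b" using hab by simp
  define N where "N = {t \<in> {a<..<b}. \<not> (\<exists>D. (h has_real_derivative D) (at t) \<and> D \<le> 0)}"
  have negN: "negligible N"
  proof -
    obtain N0 where N0: "N0 \<in> null_sets lebesgue"
      "\<And>t. t \<in> space lebesgue - N0 \<Longrightarrow> a < t \<and> t < b \<longrightarrow> (\<exists>D. (h has_real_derivative D) (at t) \<and> D \<le> 0)"
      using AE_E3[OF D] by blast
    have "N \<subseteq> N0" using N0(2) unfolding N_def by auto
    then show ?thesis using N0(1) negligible_iff_null_sets negligible_subset by blast
  qed
  have negkN: "negligible (k ` N)" by (rule ac_lusin[OF kac _ negN]) (auto simp: N_def)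
  have "\<not> {k a<..<k b} \<subseteq> k ` N"
  proof
    assume "{k a<..<k b} \<subseteq> k ` N"
    then have "negligible {k a<..<k b}" using negkN negligible_subset by blast
    then have "measure lebesgue {k a<..<k b} = 0" using negligible_iff_measure by blast
    then show False using kab by simp
  qed
  then obtain y where y: "k a < y" "y < k b" "y \<notin> k ` N" by (metis greaterThanLessThan_iff subsetI)
  define S where "S = {t \<in> {a..b}. k t \<le> y}"
  have Sclosed: "closed S" unfolding S_def
    by (rule continuous_on_closed_Collect_le[OF kc continuous_on_const closed_atLeastAtMost])
  have aS: "a \<in> S" unfolding S_def using ab y by auto
  have Sbdd: "bdd_above S" unfolding S_def by (auto intro: bdd_aboveI[of _ b])
  define \<tau> where "\<tau> = Sup S"
  have \<tau>S: "\<tau> \<in> S" unfolding \<tau>_def using closed_contains_Sup[OF _ Sbdd Sclosed] aS by blast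
  then have \<tau>ab: "a \<le> \<tau>" "\<tau> \<le> b" and k\<tau>: "k \<tau> \<le> y" unfolding S_def by auto
  have upper: "t \<le> \<tau>" if "t \<in> S" for t unfolding \<tau>_def using that Sbdd by (rule cSup_upper)
  have \<tau>b: "\<tau> < b" using \<tau>ab k\<tau> y(2) by (cases "\<tau> = b") auto
  have "k \<tau> \<ge> y"
  proof (rule ccontr)
    assume "\<not> k \<tau> \<ge> y"
    then have lt: "0 < y - k \<tau>" by simp
    obtain d where d: "d > 0" "\<And>t. t \<in> {a..b} \<Longrightarrow> dist t \<tau> < d \<Longrightarrow> dist (k t) (k \<tau>) < y - k \<tau>"
      using kc \<tau>ab lt unfolding continuous_on_iff by (metis atLeastAtMost_iff)
    define t where "t = min (\<tau> + d/2) b"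
    have t: "t \<in> {a..b}" "dist t \<tau> < d" "\<tau> < t" unfolding t_def using d(1) \<tau>ab \<tau>b by (auto simp: dist_real_def)
    then have "k t < y" using d(2)[OF t(1,2)] by (auto simp: dist_real_def)
    then have "t \<in> S" using t(1) unfolding S_def by auto
    then show False using upper t(3) by force
  qed
  then have k\<tau>y: "k \<tau> = y" using k\<tau> by simp
  have "\<tau> \<noteq> a" using k\<tau>y y(1) by auto
  then have "a < \<tau>" using \<tau>ab by simp
  have "\<tau> \<notin> N" using k\<tau>y y(3) by auto
  then obtain D where hD: "(h has_real_derivative D) (at \<tau>)" "D \<le> 0" unfolding N_def using \<open>a < \<tau>\<close> \<tau>b by auto
  have "(k has_real_derivative D + (- \<epsilon>)) (at \<tau>)" unfolding k_def
    by (intro derivative_eq_intros) (auto intro: hD(1))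
  moreover have "D + (- \<epsilon>) < 0" using hD(2) \<epsilon>pos by simp
  ultimately obtain d where d: "d > 0" "\<And>h. h > 0 \<Longrightarrow> h < d \<Longrightarrow> k \<tau> > k (\<tau> + h)"
    using DERIV_neg_dec_right by blast
  define s where "s = min (d/2) ((b - \<tau>)/2)"
  have s: "s > 0" "s < d" unfolding s_def using d(1) \<tau>b by auto
  have "k (\<tau> + s) < y" using d(2)[OF s] k\<tau>y by simp
  moreover have "\<tau> + s \<in> {a..b}" using s \<tau>ab \<tau>b unfolding s_def by (auto simp: min_def field_simps)
  ultimately have "\<tau> + s \<in> S" unfolding S_def by auto
  then show False using upper s(1) by force
qed

lemma deriv_sqdist:
  fixes \<phi> :: "real \<Rightarrow> 'a::real_inner"
  assumes "(\<phi> has_vector_derivative v) (at t)"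
  shows "((\<lambda>u. norm (\<phi> u - z)^2) has_real_derivative 2 * (v \<bullet> (\<phi> t - z))) (at t)"
proof -
  have d: "((\<lambda>u. \<phi> u - z) has_derivative (\<lambda>h. h *\<^sub>R v)) (at t)"
    using assms unfolding has_vector_derivative_def by (auto intro!: derivative_eq_intros)
  have "((\<lambda>u. (\<phi> u - z) \<bullet> (\<phi> u - z)) has_derivative (\<lambda>h. (\<phi> t - z) \<bullet> (h *\<^sub>R v) + (h *\<^sub>R v) \<bullet> (\<phi> t - z))) (at t)"
    using has_derivative_inner[OF d d] by simp
  then have "((\<lambda>u. norm (\<phi> u - z)^2) has_derivative (\<lambda>h. (2 * (v \<bullet> (\<phi> t - z))) * h)) (at t)"
    by (simp add: power2_norm_eq_inner inner_commute algebra_simps)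
  then show ?thesis by (simp add: has_field_derivative_def)
qed

lemma good_facts:
  fixes x v :: "'a::real_inner"
  assumes "- v \<in> Mop f C x"
  shows "x \<in> C" and "\<And>z. z \<in> C \<Longrightarrow> v \<bullet> (x - z) \<le> f z - f x"
proof -
  obtain a b where ab: "- v = a + b" "a \<in> subdiff f x" "b \<in> normal_cone C x"
    using assms unfolding Mop_def by blast
  show xC: "x \<in> C" using ab(3) unfolding normal_cone_def by (auto split: if_splits)
  fix z assume z: "z \<in> C"
  have "b \<bullet> (z - x) \<le> 0" using ab(3) xC z unfolding normal_cone_def by auto
  moreover have "f z \<ge> f x + a \<bullet> (z - x)" using ab(2) unfolding subdiff_def by auto
  moreover have "v \<bullet> (x - z) = a \<bullet> (z - x) + b \<bullet> (z - x)"
  proof -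
    have "v \<bullet> (x - z) = (- v) \<bullet> (z - x)" by (simp add: inner_diff_right inner_minus_left)
    also have "\<dots> = a \<bullet> (z - x) + b \<bullet> (z - x)" using ab(1) by (simp add: inner_add_left)
    finally show ?thesis .
  qed
  ultimately show "v \<bullet> (x - z) \<le> f z - f x" by linarith
qed

lemma ac_sqdist:
  fixes \<phi> :: "real \<Rightarrow> 'a::real_normed_vector"
  assumes ac: "abs_continuous_on a b \<phi>"
  shows "abs_continuous_on a b (\<lambda>t. c * norm (\<phi> t - z)^2)"
proof -
  have "continuous_on {a..b} \<phi>" by (rule ac_cont[OF ac])
  then have "compact ((\<lambda>u. \<phi> u - z) ` {a..b})"
    by (intro compact_continuous_image) (auto intro!: continuous_intros)
  then obtain R where R: "\<And>u. u \<in> {a..b} \<Longrightarrow> norm (\<phi> u - z) \<le> R"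
  proof -
    have "bounded ((\<lambda>u. \<phi> u - z) ` {a..b})" using \<open>compact _\<close> compact_imp_bounded by blast
    then obtain R where "\<forall>x\<in>(\<lambda>u. \<phi> u - z) ` {a..b}. norm x \<le> R" unfolding bounded_iff by blast
    then show ?thesis by (intro that[of R]) auto
  qed
  show ?thesis
  proof (rule ac_lip[OF ac, where L = "\<bar>c\<bar> * (2 * R)"])
    fix u v assume uv: "u \<in> {a..b}" "v \<in> {a..b}"
    define A where "A = norm (\<phi> v - z)"
    define B where "B = norm (\<phi> u - z)"
    have AB: "A \<le> R" "B \<le> R" "A \<ge> 0" "B \<ge> 0" using R uv unfolding A_def B_def by auto
    have d: "\<bar>A - B\<bar> \<le> norm (\<phi> v - \<phi> u)"
      unfolding A_def B_def using norm_triangle_ineq3[of "\<phi> v - z" "\<phi> u - z"] by simp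
    have e: "c * A^2 - c * B^2 = c * ((A - B) * (A + B))" by (simp add: power2_eq_square algebra_simps)
    have "\<bar>c * A^2 - c * B^2\<bar> = \<bar>c\<bar> * (\<bar>A - B\<bar> * (A + B))"
      unfolding e using AB by (simp add: abs_mult)
    also have "\<dots> \<le> \<bar>c\<bar> * (norm (\<phi> v - \<phi> u) * (2 * R))"
      using AB d by (intro mult_left_mono mult_mono) auto
    finally show "\<bar>c * (norm (\<phi> v - z))\<^sup>2 - c * (norm (\<phi> u - z))\<^sup>2\<bar> \<le> \<bar>c\<bar> * (2 * R) * norm (\<phi> v - \<phi> u)"
      unfolding A_def B_def by (simp add: mult_ac)
  qed
qed

lemma interval_index:
  fixes s :: "nat \<Rightarrow> real"
  assumes "s 0 = 0" "strict_mono s" "filterlim s at_top sequentially" "u \<ge> 0"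
  shows "\<exists>j. s j \<le> u \<and> u < s (Suc j)"
proof -
  have "eventually (\<lambda>j. u + 1 \<le> s j) sequentially" using assms(3) by (simp add: filterlim_at_top)
  then obtain N where "\<And>m. m \<ge> N \<Longrightarrow> u + 1 \<le> s m" unfolding eventually_sequentially by blast
  then have ex: "\<exists>j. u < s j" by (intro exI[of _ N]) force
  define n where "n = (LEAST j. u < s j)"
  have n1: "u < s n" unfolding n_def by (rule LeastI_ex[OF ex])
  have n2: "\<not> u < s m" if "m < n" for m using not_less_Least[OF that[unfolded n_def]] .
  have "n \<noteq> 0" using n1 assms(1,4) by (metis not_less)
  then obtain j where j: "n = Suc j" by (cases n) auto
  have "\<not> u < s j" using n2[of j] j by auto
  then show ?thesis using n1 j by (intro exI[of _ j]) auto
qed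

lemma sol_good:
  fixes \<phi> :: "real \<Rightarrow> 'a::real_inner"
  assumes "(\<phi> has_vector_derivative v) (at t)" "- v \<in> Mop F K (\<phi> t)"
  shows "\<phi> t \<in> K \<and> (\<forall>z\<in>K. \<exists>D. ((\<lambda>u. norm (\<phi> u - z)^2) has_real_derivative D) (at t) \<and> D \<le> 2 * (F z - F (\<phi> t)))"
proof
  show "\<phi> t \<in> K" using good_facts(1)[OF assms(2)] .
  show "\<forall>z\<in>K. \<exists>D. ((\<lambda>u. norm (\<phi> u - z)^2) has_real_derivative D) (at t) \<and> D \<le> 2 * (F z - F (\<phi> t))"
  proof
    fix z assume "z \<in> K"
    show "\<exists>D. ((\<lambda>u. norm (\<phi> u - z)^2) has_real_derivative D) (at t) \<and> D \<le> 2 * (F z - F (\<phi> t))"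
      using deriv_sqdist[OF assms(1), of z] good_facts(2)[OF assms(2) \<open>z \<in> K\<close>] by auto
  qed
qed

lemma lin_aux: "(A::real) - B < e / 4 \<Longrightarrow> X + 2 * B \<le> Y + 2 * A \<Longrightarrow> Y < e / 4 \<Longrightarrow> 0 < e \<Longrightarrow> X < e"
proof -
  assume a: "A - B < e / 4" "X + 2 * B \<le> Y + 2 * A" "Y < e / 4" "0 < e"
  define E where "E = e / 4"
  have "e = 4 * E" unfolding E_def by simp
  then show "X < e" using a unfolding E_def[symmetric] by linarith
qed

theorem corollary1:
  fixes p :: nat
    and f :: "nat \<Rightarrow> real ^ 'n \<Rightarrow> real"
    and C :: "nat \<Rightarrow> (real ^ 'n) set"
    and \<sigma> :: "real \<Rightarrow> nat"
    and \<phi> :: "real \<Rightarrow> real ^ 'n"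
  assumes conv_f: "\<And>q. q \<in> {1..p} \<Longrightarrow> convex_on UNIV (f q)"
    and C_ne: "\<And>q. q \<in> {1..p} \<Longrightarrow> C q \<noteq> {}"
    and C_closed: "\<And>q. q \<in> {1..p} \<Longrightarrow> closed (C q)"
    and C_convex: "\<And>q. q \<in> {1..p} \<Longrightarrow> convex (C q)"
    and A_ne: "(\<Inter>q\<in>{1..p}. argmin_on (f q) (C q)) \<noteq> {}"
    and sig: "switching_signal {1..p} \<sigma>"
    and sol: "complete_solution (\<lambda>q. Mop (f q) (C q)) \<sigma> \<phi>"
  shows "\<exists>L \<in> (\<Inter>q\<in>{q \<in> {1..p}. emeasure lebesgue {t. 0 \<le> t \<and> \<sigma> t = q} = \<infinity>}.
                    argmin_on (f q) (C q)).
           (\<phi> \<longlongrightarrow> L) at_top"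
proof -
  have sQ: "\<And>t. t \<ge> 0 \<Longrightarrow> \<sigma> t \<in> {1..p}" using sig unfolding switching_signal_def by blast
  obtain s where s: "s 0 = 0" "strict_mono s" "filterlim s at_top sequentially"
      "\<And>j t. t \<in> {s j..<s (Suc j)} \<Longrightarrow> \<sigma> t = \<sigma> (s j)"
    using sig unfolding switching_signal_def by blast
  have acphi: "\<And>a b. 0 \<le> a \<Longrightarrow> a \<le> b \<Longrightarrow> abs_continuous_on a b \<phi>"
    using sol unfolding complete_solution_def loc_abs_continuous_def
    by (meson ac_sub order_refl order_trans)
  have acsq: "\<And>a b c z. 0 \<le> a \<Longrightarrow> a \<le> b \<Longrightarrow> abs_continuous_on a b (\<lambda>t. c * norm (\<phi> t - z)^2)"
    using acphi ac_sqdist by blast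
  have Gd: "AE t in lebesgue. t \<ge> 0 \<longrightarrow> \<sigma> t \<in> {1..p} \<and> \<phi> t \<in> C (\<sigma> t) \<and>
      (\<forall>z\<in>C (\<sigma> t). \<exists>D. ((\<lambda>u. norm (\<phi> u - z)^2) has_real_derivative D) (at t) \<and> D \<le> 2 * (f (\<sigma> t) z - f (\<sigma> t) (\<phi> t)))"
  proof -
    have AEsol: "AE t in lebesgue. t \<ge> 0 \<longrightarrow>
        (\<exists>v. (\<phi> has_vector_derivative v) (at t) \<and> - v \<in> Mop (f (\<sigma> t)) (C (\<sigma> t)) (\<phi> t))"
      using sol unfolding complete_solution_def by blast
    then show ?thesis
  proof eventually_elim
    case (elim t)
    show ?case
    proof
      assume "t \<ge> 0"
      then obtain v where v: "(\<phi> has_vector_derivative v) (at t)" "- v \<in> Mop (f (\<sigma> t)) (C (\<sigma> t)) (\<phi> t)"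
        using elim by blast
      show "\<sigma> t \<in> {1..p} \<and> \<phi> t \<in> C (\<sigma> t) \<and>
      (\<forall>z\<in>C (\<sigma> t). \<exists>D. ((\<lambda>u. norm (\<phi> u - z)^2) has_real_derivative D) (at t) \<and> D \<le> 2 * (f (\<sigma> t) z - f (\<sigma> t) (\<phi> t)))"
        using sol_good[OF v] sQ[OF \<open>t \<ge> 0\<close>] by blast
    qed
  qed
  qed
  obtain xs where xs: "\<And>q. q \<in> {1..p} \<Longrightarrow> xs \<in> C q" "\<And>q z. q \<in> {1..p} \<Longrightarrow> z \<in> C q \<Longrightarrow> f q xs \<le> f q z"
    using A_ne unfolding argmin_on_def by blast
  define V where "V t = norm (\<phi> t - xs)^2" for t
  have V0: "V t \<ge> 0" for t unfolding V_def by simp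
  have Vmono: "V b \<le> V a" if ab: "0 \<le> a" "a \<le> b" for a b
  proof -
    have "(\<lambda>t. 1 * norm (\<phi> t - xs)^2) b \<le> (\<lambda>t. 1 * norm (\<phi> t - xs)^2) a"
    proof (rule ac_mono[OF acsq[OF ab] ab(2)])
      show "AE t in lebesgue. a < t \<and> t < b \<longrightarrow> (\<exists>D. ((\<lambda>t. 1 * norm (\<phi> t - xs)^2) has_real_derivative D) (at t) \<and> D \<le> 0)"
        using Gd
      proof eventually_elim
        case (elim t)
        show ?case
        proof
          assume t: "a < t \<and> t < b"
          then have "t \<ge> 0" using ab by simp
          then have q: "\<sigma> t \<in> {1..p}" and phC: "\<phi> t \<in> C (\<sigma> t)" and
            ex: "\<exists>D. ((\<lambda>u. norm (\<phi> u - xs)^2) has_real_derivative D) (at t) \<and> D \<le> 2 * (f (\<sigma> t) xs - f (\<sigma> t) (\<phi> t))"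
            using elim xs(1) by blast+
          then obtain D where D: "((\<lambda>u. norm (\<phi> u - xs)^2) has_real_derivative D) (at t)" "D \<le> 2 * (f (\<sigma> t) xs - f (\<sigma> t) (\<phi> t))"
            by blast
          have "f (\<sigma> t) xs \<le> f (\<sigma> t) (\<phi> t)" using xs(2)[OF q phC] .
          then show "\<exists>D. ((\<lambda>t. 1 * norm (\<phi> t - xs)^2) has_real_derivative D) (at t) \<and> D \<le> 0"
            using D by (intro exI[of _ D]) auto
        qed
      qed
    qed
    then show ?thesis unfolding V_def by simp
  qed
  have p1: "1 \<le> p" using sQ[of 0] by auto
  define R0 where "R0 = norm (\<phi> 0 - xs)"
  have bnd: "\<phi> t \<in> cball xs R0" if "t \<ge> 0" for t
  proof -
    have "V t \<le> V 0" using Vmono[of 0 t] that by simp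
    then have "norm (\<phi> t - xs) \<le> R0" unfolding V_def R0_def using power2_le_imp_le by fastforce
    then show ?thesis by (simp add: dist_norm norm_minus_commute)
  qed
  obtain y r where r: "strict_mono r" "((\<lambda>n. \<phi> (real n)) \<circ> r) \<longlonglongrightarrow> y"
  proof -
    have "seq_compact (cball xs R0)" by (rule compact_imp_seq_compact[OF compact_cball])
    moreover have "\<forall>n. (\<lambda>n. \<phi> (real n)) n \<in> cball xs R0" using bnd by simp
    ultimately show ?thesis using that by (rule seq_compactE) blast
  qed
  define Vi where "Vi = Inf (V ` {0..})"
  have Vbdd: "bdd_below (V ` {0..})" using V0 by (auto intro: bdd_belowI[of _ 0])
  have Vge: "Vi \<le> V t" if "t \<ge> 0" for t unfolding Vi_def using that Vbdd by (auto intro: cInf_lower)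
  have Vosc: "\<exists>T\<ge>0. \<forall>u w. T \<le> u \<longrightarrow> u \<le> w \<longrightarrow> V u - V w < e" if "e > 0" for e
  proof -
    have "Vi < Vi + e" using that by simp
    then obtain x where "x \<in> V ` {0..}" "x < Vi + e" unfolding Vi_def
      using cInf_less_iff[OF _ Vbdd] by (metis atLeast_iff empty_iff image_eqI order_refl)
    then obtain T where T: "T \<ge> 0" "V T < Vi + e" by auto
    show ?thesis
    proof (intro exI[of _ T] conjI allI impI)
      fix u w assume uw: "T \<le> u" "u \<le> w"
      have "V u \<le> V T" using Vmono[of T u] T uw by simp
      moreover have "Vi \<le> V w" using Vge[of w] T uw by simp
      ultimately show "V u - V w < e" using T by simp
    qed (rule T(1))
  qed
  have radq: "\<exists>\<rho>>0. \<forall>x\<in>C q. dist x y < \<rho> \<longrightarrow> y \<in> C q \<and> (f q xs < f q y \<longrightarrow> f q y + f q xs < 2 * f q x)"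
    if q: "q \<in> {1..p}" for q
  proof (cases "y \<in> C q")
    case False
    have pos: "infdist y (C q) > 0" using infdist_pos_not_in_closed[OF C_closed[OF q] C_ne[OF q] False] .
    show ?thesis
    proof (rule exI[of _ "infdist y (C q)"], rule conjI[OF pos], intro ballI impI)
      fix x assume "x \<in> C q" "dist x y < infdist y (C q)"
      then show "y \<in> C q \<and> (f q xs < f q y \<longrightarrow> f q y + f q xs < 2 * f q x)"
        using infdist_le[of x "C q" y] by (simp add: dist_commute)
    qed
  next
    case True
    show ?thesis
    proof (cases "f q xs < f q y")
      case False
      then show ?thesis using True by (intro exI[of _ 1]) auto
    next
      case lt: True
      have "continuous_on UNIV (f q)" using convex_on_continuous[OF open_UNIV conv_f[OF q]] .
      then have "isCont (f q) y" by (simp add: continuous_on_eq_continuous_at)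
      moreover have "(f q y - f q xs) / 2 > 0" using lt by simp
      ultimately obtain d where d: "d > 0" "\<And>x. dist x y < d \<Longrightarrow> dist (f q x) (f q y) < (f q y - f q xs) / 2"
        unfolding continuous_at_eps_delta by blast
      show ?thesis
      proof (rule exI[of _ d], rule conjI[OF d(1)], intro ballI impI)
        fix x assume "x \<in> C q" "dist x y < d"
        then have "\<bar>f q x - f q y\<bar> < (f q y - f q xs) / 2" using d(2) by (simp add: dist_real_def)
        then have "2 * \<bar>f q x - f q y\<bar> < f q y - f q xs" by (simp add: field_simps)
        then have "f q y + f q xs < 2 * f q x" using abs_ge_minus_self[of "f q x - f q y"] by (smt (verit))
        then show "y \<in> C q \<and> (f q xs < f q y \<longrightarrow> f q y + f q xs < 2 * f q x)" using True by simp
      qed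
    qed
  qed
  then obtain RR where RR: "\<And>q. q \<in> {1..p} \<Longrightarrow> RR q > 0 \<and> (\<forall>x\<in>C q. dist x y < RR q \<longrightarrow> y \<in> C q \<and> (f q xs < f q y \<longrightarrow> f q y + f q xs < 2 * f q x))"
    by metis
  define \<rho> where "\<rho> = Min (RR ` {1..p})"
  have \<rho>pos: "\<rho> > 0" unfolding \<rho>_def using RR p1 by (subst Min_gr_iff) auto
  have Rad: "y \<in> C q \<and> (f q xs < f q y \<longrightarrow> f q y + f q xs < 2 * f q x)"
    if "q \<in> {1..p}" "x \<in> C q" "dist x y < \<rho>" for q x
  proof -
    have "\<rho> \<le> RR q" unfolding \<rho>_def using that(1) by (intro Min_le) auto
    then show ?thesis using RR[OF that(1)] that by auto
  qed
  have Hloc: "norm (\<phi> w - y)^2 + 2 * V w \<le> norm (\<phi> t - y)^2 + 2 * V t"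
    if tw: "0 \<le> t" "t \<le> w" and inb: "\<And>u. t < u \<Longrightarrow> u < w \<Longrightarrow> dist (\<phi> u) y < \<rho>" for t w
  proof -
    have acH: "abs_continuous_on t w (\<lambda>u. 1 * norm (\<phi> u - y)^2 + 2 * norm (\<phi> u - xs)^2)"
      by (rule ac_add[OF acsq[OF tw] acsq[OF tw]])
    have "(\<lambda>u. 1 * norm (\<phi> u - y)^2 + 2 * norm (\<phi> u - xs)^2) w \<le> (\<lambda>u. 1 * norm (\<phi> u - y)^2 + 2 * norm (\<phi> u - xs)^2) t"
    proof (rule ac_mono[OF acH tw(2)])
      show "AE u in lebesgue. t < u \<and> u < w \<longrightarrow> (\<exists>D. ((\<lambda>u. 1 * norm (\<phi> u - y)^2 + 2 * norm (\<phi> u - xs)^2) has_real_derivative D) (at u) \<and> D \<le> 0)"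
        using Gd
      proof eventually_elim
        case (elim u)
        show ?case
        proof
          assume u: "t < u \<and> u < w"
          then have "u \<ge> 0" using tw by simp
          then have q: "\<sigma> u \<in> {1..p}" and phC: "\<phi> u \<in> C (\<sigma> u)" and
            ex: "\<forall>z\<in>C (\<sigma> u). \<exists>D. ((\<lambda>v. norm (\<phi> v - z)^2) has_real_derivative D) (at u) \<and> D \<le> 2 * (f (\<sigma> u) z - f (\<sigma> u) (\<phi> u))"
            using elim by blast+
          have rad: "y \<in> C (\<sigma> u) \<and> (f (\<sigma> u) xs < f (\<sigma> u) y \<longrightarrow> f (\<sigma> u) y + f (\<sigma> u) xs < 2 * f (\<sigma> u) (\<phi> u))"
            using Rad[OF q phC inb] u by blast
          obtain D1 where D1: "((\<lambda>v. norm (\<phi> v - y)^2) has_real_derivative D1) (at u)" "D1 \<le> 2 * (f (\<sigma> u) y - f (\<sigma> u) (\<phi> u))"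
            using ex rad by blast
          obtain D2 where D2: "((\<lambda>v. norm (\<phi> v - xs)^2) has_real_derivative D2) (at u)" "D2 \<le> 2 * (f (\<sigma> u) xs - f (\<sigma> u) (\<phi> u))"
            using ex xs(1)[OF q] by blast
          have m1: "f (\<sigma> u) xs \<le> f (\<sigma> u) (\<phi> u)" using xs(2)[OF q phC] .
          have m2: "f (\<sigma> u) xs \<le> f (\<sigma> u) y" using xs(2)[OF q] rad by blast
          have "1 * D1 + 2 * D2 \<le> 0"
          proof (cases "f (\<sigma> u) xs < f (\<sigma> u) y")
            case True
            then have "f (\<sigma> u) y + f (\<sigma> u) xs < 2 * f (\<sigma> u) (\<phi> u)" using rad by blast
            then show ?thesis using D1(2) D2(2) True by (smt (verit))
          next
            case False
            then show ?thesis using D1(2) D2(2) m1 m2 by (smt (verit))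
          qed
          moreover have "((\<lambda>u. 1 * norm (\<phi> u - y)^2 + 2 * norm (\<phi> u - xs)^2) has_real_derivative 1 * D1 + 2 * D2) (at u)"
            by (intro DERIV_add DERIV_cmult D1(1) D2(1))
          ultimately show "\<exists>D. ((\<lambda>u. 1 * norm (\<phi> u - y)^2 + 2 * norm (\<phi> u - xs)^2) has_real_derivative D) (at u) \<and> D \<le> 0"
            by blast
        qed
      qed
    qed
    then show ?thesis unfolding V_def by simp
  qed
  have conv: "(\<phi> \<longlongrightarrow> y) at_top"
    unfolding tendsto_iff
  proof (intro allI impI)
    fix \<epsilon> :: real assume "\<epsilon> > 0"
    define \<eta> where "\<eta> = min \<epsilon> \<rho>"
    have \<eta>pos: "\<eta> > 0" unfolding \<eta>_def using \<open>\<epsilon> > 0\<close> \<rho>pos by simp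
    define e2 where "e2 = \<eta>^2"
    have e2pos: "e2 > 0" unfolding e2_def using \<eta>pos by simp
    obtain T0 where T0: "T0 \<ge> 0" "\<And>u w. T0 \<le> u \<Longrightarrow> u \<le> w \<Longrightarrow> V u - V w < e2 / 4"
      using Vosc[of "e2 / 4"] e2pos by auto
    have lim: "(\<lambda>n. \<phi> (real (r n))) \<longlonglongrightarrow> y" using r(2) by (simp add: comp_def)
    have ev1: "eventually (\<lambda>n. dist (\<phi> (real (r n))) y < \<eta> / 2) sequentially"
      using lim[unfolded tendsto_iff, rule_format, of "\<eta> / 2"] \<eta>pos by simp
    have ev2: "eventually (\<lambda>n. T0 \<le> real (r n)) sequentially"
    proof -
      have "eventually (\<lambda>n. nat \<lceil>T0\<rceil> \<le> n) sequentially" by (rule eventually_ge_at_top)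
      then show ?thesis
      proof eventually_elim
        case (elim n)
        have "n \<le> r n" using seq_suble[OF r(1)] by simp
        then have "real (nat \<lceil>T0\<rceil>) \<le> real (r n)" using elim by linarith
        then show ?case using real_nat_ceiling_ge[of T0] by linarith
      qed
    qed
    obtain N where N: "dist (\<phi> (real (r N))) y < \<eta> / 2" "T0 \<le> real (r N)"
      using eventually_happens'[OF _ eventually_conj[OF ev1 ev2]] by auto
    define t where "t = real (r N)"
    have t0: "t \<ge> 0" unfolding t_def by simp
    have gt: "norm (\<phi> t - y)^2 < e2 / 4"
    proof -
      have "norm (\<phi> t - y) < \<eta> / 2" using N(1) unfolding t_def by (simp add: dist_norm)
      then have "norm (\<phi> t - y)^2 < (\<eta> / 2)^2" by (intro power_strict_mono) auto
      then show ?thesis unfolding e2_def by (simp add: power_divide)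
    qed
    have claim: "norm (\<phi> w - y)^2 < e2" if "w \<ge> t" for w
    proof (rule ccontr)
      assume "\<not> norm (\<phi> w - y)^2 < e2"
      then have gw: "e2 \<le> norm (\<phi> w - y)^2" by simp
      define S where "S = {u \<in> {t..w}. e2 \<le> norm (\<phi> u - y)^2}"
      have gc: "continuous_on {t..w} (\<lambda>u. norm (\<phi> u - y)^2)"
        using ac_cont[OF acsq[OF t0 that, of 1 y]] by simp
      have Scl: "closed S" unfolding S_def
        by (rule continuous_on_closed_Collect_le[OF continuous_on_const gc closed_atLeastAtMost])
      have wS: "w \<in> S" unfolding S_def using that gw by auto
      have Sbb: "bdd_below S" unfolding S_def by (auto intro: bdd_belowI[of _ t])
      define w0 where "w0 = Inf S"
      have w0S: "w0 \<in> S" unfolding w0_def using closed_contains_Inf[OF _ Sbb Scl] wS by blast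
      then have w0: "t \<le> w0" "w0 \<le> w" "e2 \<le> norm (\<phi> w0 - y)^2" unfolding S_def by auto
      have "w0 \<noteq> t" using w0(3) gt e2pos by (auto simp: field_simps)
      then have tw0: "t < w0" using w0(1) by simp
      have inb: "dist (\<phi> u) y < \<rho>" if u: "t < u" "u < w0" for u
      proof -
        have "u \<notin> S"
        proof
          assume "u \<in> S"
          then have "w0 \<le> u" unfolding w0_def using Sbb by (rule cInf_lower)
          then show False using u by simp
        qed
        then have "norm (\<phi> u - y)^2 < e2" unfolding S_def using u w0 by auto
        also have "e2 \<le> \<rho>^2" unfolding e2_def \<eta>_def using \<eta>pos \<rho>pos \<open>\<epsilon> > 0\<close>
          by (intro power_mono) auto
        finally have "norm (\<phi> u - y)^2 < \<rho>^2" .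
        then have "norm (\<phi> u - y) < \<rho>" by (rule power2_less_imp_less) (use \<rho>pos in simp)
        then show ?thesis by (simp add: dist_norm)
      qed
      have H: "norm (\<phi> w0 - y)^2 + 2 * V w0 \<le> norm (\<phi> t - y)^2 + 2 * V t"
        using Hloc[OF t0 w0(1) inb] by blast
      have "V t - V w0 < e2 / 4" using T0(2)[of t w0] N(2) w0(1) unfolding t_def by simp
      then have "norm (\<phi> w0 - y)^2 < e2" using lin_aux[OF _ H gt e2pos] by blast
      then show False using w0(3) by simp
    qed
    show "eventually (\<lambda>w. dist (\<phi> w) y < \<epsilon>) at_top"
      unfolding eventually_at_top_linorder
    proof (intro exI[of _ t] allI impI)
      fix w assume "w \<ge> t"
      then have "norm (\<phi> w - y)^2 < \<eta>^2" using claim unfolding e2_def by blast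
      then have "norm (\<phi> w - y) < \<eta>" by (rule power2_less_imp_less) (use \<eta>pos in simp)
      then show "dist (\<phi> w) y < \<epsilon>" unfolding \<eta>_def by (simp add: dist_norm)
    qed
  qed
  have evT: "\<exists>T\<ge>0. \<forall>u\<ge>T. dist (\<phi> u) y < e" if "e > 0" for e
  proof -
    have "eventually (\<lambda>u. dist (\<phi> u) y < e) at_top" using conv that unfolding tendsto_iff by blast
    then obtain T where "\<forall>u\<ge>T. dist (\<phi> u) y < e" unfolding eventually_at_top_linorder by blast
    then show ?thesis by (intro exI[of _ "max T 0"]) auto
  qed
  have s_nonneg: "s j \<ge> 0" for j using s(1) strict_mono_less_eq[OF s(2), of 0 j] by simp
  show ?thesis
  proof (rule bexI[of _ y])
    show "(\<phi> \<longlongrightarrow> y) at_top" by (rule conv)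
    show "y \<in> (\<Inter>q\<in>{q \<in> {1..p}. emeasure lebesgue {t. 0 \<le> t \<and> \<sigma> t = q} = \<infinity>}. argmin_on (f q) (C q))"
    proof (rule INT_I)
      fix q assume "q \<in> {q \<in> {1..p}. emeasure lebesgue {t. 0 \<le> t \<and> \<sigma> t = q} = \<infinity>}"
      then have q: "q \<in> {1..p}" and inf: "emeasure lebesgue {t. 0 \<le> t \<and> \<sigma> t = q} = \<infinity>" by auto
      have yC: "y \<in> C q"
      proof (rule ccontr)
        assume nC: "y \<notin> C q"
        have pos: "infdist y (C q) > 0" using infdist_pos_not_in_closed[OF C_closed[OF q] C_ne[OF q] nC] .
        obtain T where T: "T \<ge> 0" "\<And>u. u \<ge> T \<Longrightarrow> dist (\<phi> u) y < infdist y (C q)"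
          using evT[OF pos] by blast
        have AEn: "AE u in lebesgue. u \<ge> T \<longrightarrow> \<sigma> u \<noteq> q"
          using Gd
        proof eventually_elim
          case (elim u)
          show ?case
          proof (intro impI notI)
            assume u: "u \<ge> T" "\<sigma> u = q"
            then have "\<phi> u \<in> C q" using elim T(1) by auto
            then have "infdist y (C q) \<le> dist y (\<phi> u)" by (rule infdist_le)
            then show False using T(2)[OF u(1)] by (simp add: dist_commute)
          qed
        qed
        obtain N where N: "N \<in> null_sets lebesgue" "\<And>u. u \<in> space lebesgue - N \<Longrightarrow> u \<ge> T \<longrightarrow> \<sigma> u \<noteq> q"
          using AE_E3[OF AEn] by blast
        have "{t. 0 \<le> t \<and> \<sigma> t = q} \<subseteq> {0..T} \<union> N" using N(2) by force
        then have "emeasure lebesgue {t. 0 \<le> t \<and> \<sigma> t = q} \<le> emeasure lebesgue ({0..T} \<union> N)"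
          using N(1) by (intro emeasure_mono) auto
        also have "\<dots> \<le> emeasure lebesgue {0..T} + emeasure lebesgue N"
          using N(1) by (intro emeasure_subadditive) auto
        also have "\<dots> = ennreal T" using N(1) T(1) by (simp add: null_setsD1)
        finally show False using inf by (simp add: top_unique)
      qed
      have ymin: "f q y \<le> f q xs"
      proof (rule ccontr)
        assume "\<not> f q y \<le> f q xs"
        then have lt: "f q xs < f q y" by simp
        define c where "c = f q y - f q xs"
        have cpos: "c > 0" unfolding c_def using lt by simp
        obtain T where T: "T \<ge> 0" "\<And>u. u \<ge> T \<Longrightarrow> dist (\<phi> u) y < \<rho>"
          using evT[OF \<rho>pos] by blast
        have "eventually (\<lambda>j. T \<le> s j) sequentially" using s(3) by (simp add: filterlim_at_top)
        then obtain J where J: "T \<le> s J" unfolding eventually_sequentially by blast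
        define x where "x j = (if \<sigma> (s j) = q then s (Suc j) - s j else 0)" for j
        have sle: "s j \<le> s (Suc j)" for j using strict_mono_less_eq[OF s(2)] by simp
        have x0: "x j \<ge> 0" for j unfolding x_def using sle[of j] by simp
        have stepK: "V (s (Suc K)) + c * x K \<le> V (s K)" if K: "J \<le> K" for K
        proof (cases "\<sigma> (s K) = q")
          case False
          then show ?thesis unfolding x_def using Vmono[OF s_nonneg sle] by simp
        next
          case sq: True
          have acH: "abs_continuous_on (s K) (s (Suc K)) (\<lambda>u. 1 * norm (\<phi> u - xs)^2 + c * u)"
            by (rule ac_add[OF acsq[OF s_nonneg sle] ac_linear])
          have "(\<lambda>u. 1 * norm (\<phi> u - xs)^2 + c * u) (s (Suc K)) \<le> (\<lambda>u. 1 * norm (\<phi> u - xs)^2 + c * u) (s K)"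
          proof (rule ac_mono[OF acH sle])
            show "AE u in lebesgue. s K < u \<and> u < s (Suc K) \<longrightarrow> (\<exists>D. ((\<lambda>u. 1 * norm (\<phi> u - xs)^2 + c * u) has_real_derivative D) (at u) \<and> D \<le> 0)"
              using Gd
            proof eventually_elim
              case (elim u)
              show ?case
              proof
                assume u: "s K < u \<and> u < s (Suc K)"
                then have u0: "u \<ge> 0" using s_nonneg[of K] by simp
                have squ: "\<sigma> u = q" using s(4)[of u K] u sq by auto
                have uT: "u \<ge> T" using J strict_mono_less_eq[OF s(2), of J K] K u by simp
                have phC: "\<phi> u \<in> C q" and
                  ex: "\<forall>z\<in>C q. \<exists>D. ((\<lambda>v. norm (\<phi> v - z)^2) has_real_derivative D) (at u) \<and> D \<le> 2 * (f q z - f q (\<phi> u))"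
                  using elim u0 squ by auto
                obtain D2 where D2: "((\<lambda>v. norm (\<phi> v - xs)^2) has_real_derivative D2) (at u)" "D2 \<le> 2 * (f q xs - f q (\<phi> u))"
                  using ex xs(1)[OF q] by blast
                have "f q y + f q xs < 2 * f q (\<phi> u)" using Rad[OF q phC T(2)[OF uT]] lt by blast
                then have "1 * D2 + c \<le> 0" using D2(2) unfolding c_def by (smt (verit))
                moreover have "((\<lambda>u. 1 * norm (\<phi> u - xs)^2 + c * u) has_real_derivative 1 * D2 + c) (at u)"
                  by (intro DERIV_add DERIV_cmult D2(1) DERIV_cmult_Id)
                ultimately show "\<exists>D. ((\<lambda>u. 1 * norm (\<phi> u - xs)^2 + c * u) has_real_derivative D) (at u) \<and> D \<le> 0"
                  by blast
              qed
            qed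
          qed
          then show ?thesis unfolding V_def x_def using sq by (simp add: algebra_simps)
        qed
        have tel: "V (s K) + c * (\<Sum>j\<in>{J..<K}. x j) \<le> V (s J)" if "J \<le> K" for K
          using that
        proof (induction K rule: dec_induct)
          case base
          then show ?case by simp
        next
          case (step n)
          have "V (s (Suc n)) + c * (\<Sum>j\<in>{J..<Suc n}. x j) = V (s (Suc n)) + c * x n + c * (\<Sum>j\<in>{J..<n}. x j)"
            using step(1) by (simp add: algebra_simps)
          also have "\<dots> \<le> V (s n) + c * (\<Sum>j\<in>{J..<n}. x j)" using stepK[OF \<open>J \<le> n\<close>] by simp
          finally show ?case using step(3) by simp
        qed
        have bnd: "(\<Sum>j\<in>{J..<K}. x j) \<le> V (s J) / c" for K
        proof (cases "J \<le> K")
          case True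
          then have "c * (\<Sum>j\<in>{J..<K}. x j) \<le> V (s J)" using tel[OF True] V0[of "s K"] by linarith
          then show ?thesis using cpos by (simp add: field_simps)
        next
          case False
          then show ?thesis using V0[of "s J"] cpos by simp
        qed
        define I where "I j = (if J \<le> j \<and> \<sigma> (s j) = q then {s j..<s (Suc j)} else {})" for j
        have sub: "{t. 0 \<le> t \<and> \<sigma> t = q} \<subseteq> {0..s J} \<union> (\<Union>j. I j)"
        proof
          fix u assume "u \<in> {t. 0 \<le> t \<and> \<sigma> t = q}"
          then have u: "0 \<le> u" "\<sigma> u = q" by auto
          obtain j where j: "s j \<le> u" "u < s (Suc j)" using interval_index[OF s(1) s(2) s(3) u(1)] by blast
          have sj: "\<sigma> (s j) = q" using s(4)[of u j] j u(2) by auto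
          show "u \<in> {0..s J} \<union> (\<Union>j. I j)"
          proof (cases "J \<le> j")
            case True
            then have "u \<in> I j" unfolding I_def using sj j by auto
            then show ?thesis by blast
          next
            case False
            then have "s (Suc j) \<le> s J" using strict_mono_less_eq[OF s(2), of "Suc j" J] by simp
            then show ?thesis using j u(1) by auto
          qed
        qed
        have Isets: "I j \<in> sets lebesgue" for j unfolding I_def by auto
        have eI: "emeasure lebesgue (I j) = ennreal (if J \<le> j then x j else 0)" for j
          unfolding I_def x_def using sle[of j] by auto
        have "(\<Sum>j. emeasure lebesgue (I j)) = (SUP n. \<Sum>j<n. emeasure lebesgue (I j))"
          by (rule suminf_eq_SUP)
        also have "\<dots> \<le> ennreal (V (s J) / c)"
        proof (rule SUP_least)
          fix n
          have "(\<Sum>j<n. emeasure lebesgue (I j)) = ennreal (\<Sum>j<n. (if J \<le> j then x j else 0))"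
            unfolding eI using x0 by (intro sum_ennreal) auto
          also have "(\<Sum>j<n. (if J \<le> j then x j else 0)) = (\<Sum>j\<in>{j\<in>{..<n}. J \<le> j}. x j)"
            using sum.inter_filter[of "{..<n}" x "\<lambda>j. J \<le> j"] by simp
          also have "{j\<in>{..<n}. J \<le> j} = {J..<n}" by auto
          finally show "(\<Sum>j<n. emeasure lebesgue (I j)) \<le> ennreal (V (s J) / c)"
            using bnd[of n] by (simp add: ennreal_leI)
        qed
        finally have sumle: "(\<Sum>j. emeasure lebesgue (I j)) \<le> ennreal (V (s J) / c)" .
        have "emeasure lebesgue {t. 0 \<le> t \<and> \<sigma> t = q} \<le> emeasure lebesgue ({0..s J} \<union> (\<Union>j. I j))"
          using sub Isets by (intro emeasure_mono) auto
        also have "\<dots> \<le> emeasure lebesgue {0..s J} + emeasure lebesgue (\<Union>j. I j)"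
          using Isets by (intro emeasure_subadditive) auto
        also have "emeasure lebesgue (\<Union>j. I j) \<le> (\<Sum>j. emeasure lebesgue (I j))"
          using Isets by (intro emeasure_subadditive_countably) auto
        also have "emeasure lebesgue {0..s J} = ennreal (s J)" using s_nonneg[of J] by simp
        finally have "emeasure lebesgue {t. 0 \<le> t \<and> \<sigma> t = q} \<le> ennreal (s J) + ennreal (V (s J) / c)"
          using sumle by (meson add_left_mono order_trans)
        then show False using inf by (simp add: top_unique)
      qed
      show "y \<in> argmin_on (f q) (C q)"
        unfolding argmin_on_def using yC ymin xs(2)[OF q] by (auto intro: order_trans)
    qed
  qed
qed

end
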